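(* Let $K$ be a field, $S=K[x_1,\ldots,x_n]$, $I\subset S$ a monomial ideal with $I\ne S$ and $G(I)=\{x^{a_1},\ldots,x^{a_m}\}$. Let $T$ be the polynomial ring over $K$ in variables $x_{l1},\ldots,x_{lm_l}$, $l=1,\ldots,n$. For $l=1,\ldots,n$ and $j=1,\ldots,m$ let $L_{l,a_j(l)}$ be a monomial ideal in $x_{l1},\ldots,x_{lm_l}$ with $L_{l,a_j(l)}\subset L_{l,a_k(l)}$ whenever $a_j(l)\ge a_k(l)$, and let $L_j=\prod_{l=1}^nL_{l,a_j(l)}\subset T$. Then the ideals $L_{ij}$ of the complex $\mathbb{F}^*$ of $L_1,\ldots,L_m$ induced by $I$ satisfy \[ L_{ij}=\prod_{l=1}^nL_{l,a_{ij}(l)}\quad\text{for all }1\le i\le p,\ 1\le j\le\beta_i, \] where $L_{l,a_{ij}(l)}$ denotes $L_{l,a_k(l)}$ for any $k$ with $a_k(l)=a_{ij}(l)$ (such $k$ always exists).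
   Context: For $a\in\mathbb{N}^n$, $x^a=x_1^{a(1)}\cdots x_n^{a(n)}$; $G(I)$ is the minimal monomial generating set. Let $0\to F_p\to\cdots\to F_1\to F_0\to S/I\to 0$ be the $\mathbb{Z}^n$-graded minimal free resolution of $S/I$ with differential $\partial$, where $F_0=S$ with basis $f_{01}$ of degree $0$, and $F_i=\bigoplus_{j=1}^{\beta_i}Sf_{ij}$ with $f_{ij}$ homogeneous of multidegree $a_{ij}\in\mathbb{N}^n$; here $\beta_1=m$, $a_{1j}=a_j$, $\partial(f_{1j})=x^{a_j}f_{01}$. Write $\partial(f_{ij})=\sum_k\lambda^{(i)}_{kj}x^{a_{ij}-a_{i-1,k}}f_{i-1,k}$ with $\lambda^{(i)}_{kj}\in K$, where $\lambda^{(i)}_{kj}=0$ whenever $a_{ij}-a_{i-1,k}\notin\mathbb{N}^n$. The ideals of $\mathbb{F}^*$ are defined by $L_{1j}=L_j$ and, for $i\ge2$, $L_{ij}=\bigcap_{k:\lambda^{(i)}_{kj}\ne0}L_{i-1,k}$. *)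

theory Defs
  imports Main "HOL-Library.Poly_Mapping"
begin

type_synonym ('v, 'k) mpoly = "('v \<Rightarrow>\<^sub>0 nat) \<Rightarrow>\<^sub>0 'k"

definition xmon :: "('v::finite \<Rightarrow> nat) \<Rightarrow> ('v, 'k::field) mpoly" where
  "xmon e = Poly_Mapping.single (Abs_poly_mapping e) 1"

definition const :: "'k::field \<Rightarrow> ('v, 'k) mpoly" where
  "const c = Poly_Mapping.single 0 c"

definition ideal_gen :: "'a::comm_ring_1 set \<Rightarrow> 'a set" where
  "ideal_gen A = {\<Sum>x\<in>F. r x * x | F r. finite F \<and> F \<subseteq> A}"

definition monomial_ideal_in :: "'w set \<Rightarrow> ('w, 'k::field) mpoly set \<Rightarrow> bool" where
  "monomial_ideal_in V J \<longleftrightarrow>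
     (\<exists>M. (\<forall>t\<in>M. Poly_Mapping.keys t \<subseteq> V) \<and> J = ideal_gen ((\<lambda>t. Poly_Mapping.single t 1) ` M))"

definition ideal_prod :: "('v::finite \<Rightarrow> 'a::comm_ring_1 set) \<Rightarrow> 'a set" where
  "ideal_prod J = ideal_gen {\<Prod>l\<in>UNIV. f l | f. \<forall>l. f l \<in> J l}"

text \<open>Free module F_i = S^{beta i}: coordinate vectors indexed by 0..<beta i.\<close>
definition freemod :: "nat \<Rightarrow> (nat \<Rightarrow> ('v, 'k::field) mpoly) set" where
  "freemod b = {v. \<forall>j\<ge>b. v j = 0}"

definition diff ::
  "(nat \<Rightarrow> nat) \<Rightarrow> (nat \<Rightarrow> nat \<Rightarrow> 'v::finite \<Rightarrow> nat) \<Rightarrow> (nat \<Rightarrow> nat \<Rightarrow> nat \<Rightarrow> 'k::field)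
    \<Rightarrow> nat \<Rightarrow> (nat \<Rightarrow> ('v, 'k) mpoly) \<Rightarrow> (nat \<Rightarrow> ('v, 'k) mpoly)" where
  "diff beta deg lam i v =
     (\<lambda>k. if k < beta (i - 1)
          then (\<Sum>j<beta i. const (lam i k j) * xmon (deg i j - deg (i - 1) k) * v j)
          else 0)"

text \<open>(beta, deg, lam, p) is the Z^n-graded minimal free resolution of S/I, I generated by
  the monomials x^(a j), j < m.  Indices: homological degree i, basis index j < beta i
  (0-based).\<close>
definition is_min_graded_resolution ::
  "nat \<Rightarrow> (nat \<Rightarrow> 'v::finite \<Rightarrow> nat) \<Rightarrow> nat \<Rightarrow> (nat \<Rightarrow> nat) \<Rightarrow> (nat \<Rightarrow> nat \<Rightarrow> 'v \<Rightarrow> nat)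
    \<Rightarrow> (nat \<Rightarrow> nat \<Rightarrow> nat \<Rightarrow> 'k::field) \<Rightarrow> bool" where
  "is_min_graded_resolution m a p beta deg lam \<longleftrightarrow>
     beta 0 = 1 \<and> deg 0 0 = (\<lambda>_. 0) \<and>
     beta 1 = m \<and> (\<forall>j<m. deg 1 j = a j \<and> lam 1 0 j = 1) \<and>
     (\<forall>i>p. beta i = 0) \<and>
     (\<forall>i\<ge>1. \<forall>k<beta (i - 1). \<forall>j<beta i. lam i k j \<noteq> 0 \<longrightarrow> deg (i - 1) k \<le> deg i j) \<and>
     \<comment> \<open>exactness at F_i for i \<ge> 1 (im d_1 = I holds by construction)\<close>
     (\<forall>i\<ge>1. \<forall>v\<in>(freemod (beta i) :: (nat \<Rightarrow> ('v, 'k) mpoly) set).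
        diff beta deg lam i v = (\<lambda>_. 0) \<longleftrightarrow> v \<in> diff beta deg lam (i + 1) ` freemod (beta (i + 1))) \<and>
     \<comment> \<open>minimality: all matrix entries lie in the graded maximal ideal\<close>
     (\<forall>i\<ge>1. \<forall>k<beta (i - 1). \<forall>j<beta i. lam i k j \<noteq> 0 \<longrightarrow> deg (i - 1) k \<noteq> deg i j)"

fun Lcx :: "(nat \<Rightarrow> 'a set) \<Rightarrow> (nat \<Rightarrow> nat) \<Rightarrow> (nat \<Rightarrow> nat \<Rightarrow> nat \<Rightarrow> 'k::zero) \<Rightarrow> nat \<Rightarrow> nat \<Rightarrow> 'a set" where
  "Lcx Lj beta lam 0 j = UNIV"
| "Lcx Lj beta lam (Suc 0) j = Lj j"
| "Lcx Lj beta lam (Suc (Suc i)) j =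
     \<Inter> {Lcx Lj beta lam (Suc i) k | k. k < beta (Suc i) \<and> lam (Suc (Suc i)) k j \<noteq> 0}"

end

theory Submission
  imports Defs HOL.Modules
begin


interpretation rmod: module "(*) :: 'a::comm_ring_1 \<Rightarrow> 'a \<Rightarrow> 'a"
  by standard (auto simp: algebra_simps)

lemma ideal_gen_span: "ideal_gen A = rmod.span A"
  unfolding ideal_gen_def rmod.span_explicit by simp

lemma single_keys_prod:
  "finite A \<Longrightarrow> (\<Prod>l\<in>A. Poly_Mapping.single (s l) (1::'k::comm_ring_1)) = Poly_Mapping.single (\<Sum>l\<in>A. s l) 1"
  by (induction A rule: finite_induct) (auto simp: mult_single)

lemma keys_single_mult:
  fixes s :: "'a::comm_monoid_add"
  assumes "t \<in> Poly_Mapping.keys (r * Poly_Mapping.single s (1::'k::comm_ring_1))"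
  shows "\<exists>u. t = s + u"
proof -
  have "t \<in> {a + b | a b. a \<in> Poly_Mapping.keys r \<and> b \<in> Poly_Mapping.keys (Poly_Mapping.single s (1::'k))}"
    using keys_mult assms by blast
  then obtain a where "t = a + s" by auto
  then show ?thesis by (intro exI[of _ a]) (simp add: add.commute)
qed

lemma monomial_ideal_keys:
  assumes "f \<in> ideal_gen ((\<lambda>t. Poly_Mapping.single t (1::'k::comm_ring_1)) ` M)" "t \<in> Poly_Mapping.keys f"
  shows "\<exists>s\<in>M. \<exists>u. t = s + u"
proof -
  obtain F r where F: "finite F" "F \<subseteq> (\<lambda>t. Poly_Mapping.single t (1::'k)) ` M" "f = (\<Sum>x\<in>F. r x * x)"
    using assms(1) unfolding ideal_gen_def by blast
  then obtain x where x: "x \<in> F" "t \<in> Poly_Mapping.keys (r x * x)"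
    using assms(2) keys_sum[of "\<lambda>x. r x * x" F] by blast
  then obtain s where "s \<in> M" "x = Poly_Mapping.single s 1" using F by blast
  then show ?thesis using x keys_single_mult by blast
qed

lemma poly_expand: "f = (\<Sum>t\<in>Poly_Mapping.keys f. Poly_Mapping.single t (Poly_Mapping.lookup f t))"
  by (rule poly_mapping_eqI) (simp add: lookup_sum lookup_single when_def in_keys_iff)

lemma ideal_prod_mono: "(\<And>l. J l \<subseteq> J' l) \<Longrightarrow> ideal_prod J \<subseteq> ideal_prod J'"
  unfolding ideal_prod_def ideal_gen_span by (rule rmod.span_mono) blast

lemma ideal_prod_sub:
  fixes J :: "'v::finite \<Rightarrow> 'a::comm_ring_1 set"
  assumes "\<And>l. \<exists>A. J l = ideal_gen A"
  shows "ideal_prod J \<subseteq> J l0"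
proof -
  obtain A where A: "J l0 = rmod.span A" using assms ideal_gen_span by metis
  have "{\<Prod>l\<in>UNIV. f l | f. \<forall>l. f l \<in> J l} \<subseteq> J l0"
  proof
    fix x assume "x \<in> {\<Prod>l\<in>UNIV. f l | f. \<forall>l. f l \<in> J l}"
    then obtain f where f: "x = (\<Prod>l\<in>UNIV. f l)" "\<forall>l. f l \<in> J l" by blast
    have "x = (\<Prod>l\<in>UNIV - {l0}. f l) * f l0"
      unfolding f(1) by (metis finite UNIV_I mult.commute prod.remove)
    also have "\<dots> \<in> J l0" unfolding A using f(2) A by (intro rmod.span_scale) auto
    finally show "x \<in> J l0" .
  qed
  then have "rmod.span {\<Prod>l\<in>UNIV. f l | f. \<forall>l. f l \<in> J l} \<subseteq> rmod.span A"
    unfolding A by (rule rmod.span_minimal[OF _ rmod.subspace_span])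
  then show ?thesis unfolding ideal_prod_def ideal_gen_span A .
qed

lemma inter_sub_prod:
  fixes J :: "'v::finite \<Rightarrow> ('w::finite, 'k::field) mpoly set"
  assumes mon: "\<And>l. monomial_ideal_in (blk -` {l}) (J l)"
    and f: "\<And>l. f \<in> J l"
  shows "f \<in> ideal_prod J"
proof -
  obtain M where M: "\<And>l. \<forall>t\<in>M l. Poly_Mapping.keys t \<subseteq> blk -` {l}"
     "\<And>l. J l = ideal_gen ((\<lambda>t. Poly_Mapping.single t 1) ` M l)"
    using mon unfolding monomial_ideal_in_def by metis
  let ?G = "{\<Prod>l\<in>UNIV. g l | g. \<forall>l. g l \<in> J l}"
  have mono: "Poly_Mapping.single t c \<in> ideal_prod J" if t: "t \<in> Poly_Mapping.keys f" for t c
  proof -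
    have "\<forall>l. \<exists>s\<in>M l. \<exists>u. t = s + u"
      using monomial_ideal_keys[OF _ t] f M(2) by metis
    then obtain s where s: "\<And>l. s l \<in> M l" "\<And>l. \<exists>u. t = s l + u" by metis
    define S where "S = (\<Sum>l\<in>UNIV. s l)"
    have lS: "Poly_Mapping.lookup S w = Poly_Mapping.lookup (s (blk w)) w" for w
    proof -
      have "Poly_Mapping.lookup S w = (\<Sum>l\<in>UNIV. Poly_Mapping.lookup (s l) w)"
        unfolding S_def lookup_sum ..
      also have "\<dots> = Poly_Mapping.lookup (s (blk w)) w"
      proof (rule sum.mono_neutral_right[of UNIV "{blk w}", simplified])
        show "\<forall>l\<in>UNIV - {blk w}. Poly_Mapping.lookup (s l) w = 0"
        proof
          fix l assume l: "l \<in> UNIV - {blk w}"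
          show "Poly_Mapping.lookup (s l) w = 0"
          proof (rule ccontr)
            assume "Poly_Mapping.lookup (s l) w \<noteq> 0"
            then have "w \<in> Poly_Mapping.keys (s l)" by (simp add: in_keys_iff)
            then have "blk w = l" using M(1)[of l] s(1)[of l] by blast
            then show False using l by simp
          qed
        qed
      qed
      finally show ?thesis .
    qed
    have le: "Poly_Mapping.lookup S w \<le> Poly_Mapping.lookup t w" for w
    proof -
      obtain u where "t = s (blk w) + u" using s(2) by blast
      then show ?thesis unfolding lS by (simp add: lookup_add)
    qed
    define u where "u = t - S"
    have tS: "t = u + S"
      by (rule poly_mapping_eqI) (simp add: u_def lookup_add lookup_minus le)
    have eqt: "Poly_Mapping.single t c = Poly_Mapping.single u c * (\<Prod>l\<in>UNIV. Poly_Mapping.single (s l) 1)"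
      by (simp add: single_keys_prod mult_single S_def[symmetric] tS)
    have memG: "(\<Prod>l\<in>UNIV. Poly_Mapping.single (s l) (1::'k)) \<in> ?G"
      using s(1) M(2) by (auto simp: ideal_gen_span intro!: rmod.span_base exI[of _ "\<lambda>l. Poly_Mapping.single (s l) 1"])
    show ?thesis unfolding ideal_prod_def ideal_gen_span eqt
      by (rule rmod.span_scale, rule rmod.span_base, rule memG)
  qed
  have "f = (\<Sum>t\<in>Poly_Mapping.keys f. Poly_Mapping.single t (Poly_Mapping.lookup f t))"
    by (rule poly_expand)
  also have "\<dots> \<in> ideal_prod J"
    unfolding ideal_prod_def ideal_gen_span
    using mono unfolding ideal_prod_def ideal_gen_span by (intro rmod.span_sum) auto
  finally show ?thesis .
qed



lemma lookup_Abs_fin: "Poly_Mapping.lookup (Abs_poly_mapping (e::'v::finite \<Rightarrow> 'b::zero)) = e"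
  by (simp add: Abs_poly_mapping_inverse)

lemma Abs_zero_iff: "(Abs_poly_mapping (e::'v::finite \<Rightarrow> 'b::zero) = 0) \<longleftrightarrow> e = (\<lambda>_. 0)"
proof
  assume h: "Abs_poly_mapping e = 0"
  have "e = Poly_Mapping.lookup (Abs_poly_mapping e)" by (simp only: lookup_Abs_fin)
  then show "e = (\<lambda>_. 0)" using h by (simp add: fun_eq_iff)
next
  assume "e = (\<lambda>_. 0)"
  then show "Abs_poly_mapping e = 0" by (intro poly_mapping_eqI) (simp add: lookup_Abs_fin)
qed

lemma xmon_add: "xmon c * (xmon d :: ('v::finite,'k::field) mpoly) = xmon (\<lambda>v. c v + d v)"
proof -
  have "Abs_poly_mapping c + Abs_poly_mapping d = Abs_poly_mapping (\<lambda>v. c v + d v)"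
    by (rule poly_mapping_eqI) (simp add: lookup_add lookup_Abs_fin)
  then show ?thesis unfolding xmon_def by (simp add: mult_single)
qed

lemma sum_eq_zero_pm: "(s::'a \<Rightarrow>\<^sub>0 nat) + b = 0 \<Longrightarrow> s = 0"
  by (metis add_is_0 lookup_add lookup_zero poly_mapping_eqI)

lemma single_mult_lookup0:
  assumes "(s::'a \<Rightarrow>\<^sub>0 nat) \<noteq> 0"
  shows "Poly_Mapping.lookup (Poly_Mapping.single s (a::'k::comm_ring_1) * p) 0 = 0"
proof (rule ccontr)
  assume "Poly_Mapping.lookup (Poly_Mapping.single s a * p) 0 \<noteq> 0"
  then have "0 \<in> Poly_Mapping.keys (Poly_Mapping.single s a * p)" by (simp add: in_keys_iff)
  then obtain x b where "0 = x + b" "x \<in> Poly_Mapping.keys (Poly_Mapping.single s a)"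
    using keys_mult by blast
  then show False using assms sum_eq_zero_pm by (auto split: if_splits)
qed

lemma single_mult_expand:
  "Poly_Mapping.single s (1::'k::comm_ring_1) * p
    = (\<Sum>t\<in>Poly_Mapping.keys p. Poly_Mapping.single (s + t) (Poly_Mapping.lookup p t))"
proof -
  have "Poly_Mapping.single s (1::'k) * p = Poly_Mapping.single s 1 * (\<Sum>t\<in>Poly_Mapping.keys p. Poly_Mapping.single t (Poly_Mapping.lookup p t))"
    by (subst poly_expand) simp
  also have "\<dots> = (\<Sum>t\<in>Poly_Mapping.keys p. Poly_Mapping.single (s + t) (Poly_Mapping.lookup p t))"
    by (simp add: sum_distrib_left mult_single)
  finally show ?thesis .
qed

lemma single_mult_cancel:
  fixes s :: "'a \<Rightarrow>\<^sub>0 nat" and p :: "('a \<Rightarrow>\<^sub>0 nat) \<Rightarrow>\<^sub>0 'k::comm_ring_1"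
  assumes "Poly_Mapping.single s 1 * p = 0"
  shows "p = 0"
proof (rule poly_mapping_eqI)
  fix t0
  have "Poly_Mapping.lookup (Poly_Mapping.single s 1 * p) (s + t0)
     = (\<Sum>t\<in>Poly_Mapping.keys p. (Poly_Mapping.lookup p t when s + t = s + t0))"
    by (simp add: single_mult_expand lookup_sum lookup_single)
  also have "\<dots> = (\<Sum>t\<in>Poly_Mapping.keys p. (Poly_Mapping.lookup p t when t = t0))"
    by simp
  also have "\<dots> = Poly_Mapping.lookup p t0"
    by (simp add: when_def in_keys_iff)
  finally show "Poly_Mapping.lookup p t0 = Poly_Mapping.lookup 0 t0" using assms by simp
qed

lemma xmon_cancel: "xmon c * (p :: ('v::finite,'k::field) mpoly) = 0 \<Longrightarrow> p = 0"
  unfolding xmon_def by (rule single_mult_cancel)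

lemma xmon_lookup0: "c \<noteq> (\<lambda>_. 0) \<Longrightarrow> Poly_Mapping.lookup (xmon c * (p :: ('v::finite,'k::field) mpoly)) 0 = 0"
proof -
  assume "c \<noteq> (\<lambda>_. 0)"
  then have "Abs_poly_mapping c \<noteq> 0" by (simp only: Abs_zero_iff not_False_eq_True)
  then show ?thesis unfolding xmon_def by (rule single_mult_lookup0)
qed

lemma const_xmon_lookup0: "c \<noteq> (\<lambda>_. 0) \<Longrightarrow> Poly_Mapping.lookup (const a * xmon c * (p :: ('v::finite,'k::field) mpoly)) 0 = 0"
proof -
  assume "c \<noteq> (\<lambda>_. 0)"
  then have "Abs_poly_mapping c \<noteq> 0" by (simp only: Abs_zero_iff not_False_eq_True)
  then show ?thesis unfolding xmon_def const_def mult_single by (simp only: add_0 mult_1_right) (rule single_mult_lookup0)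
qed

lemma const_zero: "const 0 = 0"
  by (simp add: const_def)

lemma diff_scale: "diff beta deg lam i (\<lambda>j. q * v j) = (\<lambda>k. q * diff beta deg lam i v k)"
  unfolding diff_def
proof (rule ext)
  fix k
  have "(\<Sum>j<beta i. const (lam i k j) * xmon (deg i j - deg (i - 1) k) * (q * v j))
     = q * (\<Sum>j<beta i. const (lam i k j) * xmon (deg i j - deg (i - 1) k) * v j)"
    unfolding sum_distrib_left by (rule sum.cong) (simp_all only: mult.left_commute)
  then show "(if k < beta (i - 1) then \<Sum>j<beta i. const (lam i k j) * xmon (deg i j - deg (i - 1) k) * (q * v j) else 0) =
         q * (if k < beta (i - 1) then \<Sum>j<beta i. const (lam i k j) * xmon (deg i j - deg (i - 1) k) * v j else 0)"
    by simp
qed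

lemma diff_sub: "diff beta deg lam i (\<lambda>j. v j - w j) = (\<lambda>k. diff beta deg lam i v k - diff beta deg lam i w k)"
  unfolding diff_def by (rule ext) (simp add: sum_subtractf right_diff_distrib)



lemma res_exact:
  fixes deg :: "nat \<Rightarrow> nat \<Rightarrow> 'v::finite \<Rightarrow> nat" and lam :: "nat \<Rightarrow> nat \<Rightarrow> nat \<Rightarrow> 'k::field"
  assumes "is_min_graded_resolution m a p beta deg lam" "i \<ge> 1"
    "v \<in> (freemod (beta i) :: (nat \<Rightarrow> ('v, 'k) mpoly) set)"
  shows "diff beta deg lam i v = (\<lambda>_. 0) \<longleftrightarrow> v \<in> diff beta deg lam (i + 1) ` freemod (beta (i + 1))"
  using assms unfolding is_min_graded_resolution_def by blast

lemma res_le: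
  fixes deg :: "nat \<Rightarrow> nat \<Rightarrow> 'v::finite \<Rightarrow> nat" and lam :: "nat \<Rightarrow> nat \<Rightarrow> nat \<Rightarrow> 'k::field"
  assumes "is_min_graded_resolution m a p beta deg lam" "i \<ge> 1" "k < beta (i - 1)" "j < beta i" "lam i k j \<noteq> 0"
  shows "deg (i - 1) k \<le> deg i j" "deg (i - 1) k \<noteq> deg i j"
proof -
  have A: "\<forall>i\<ge>1. \<forall>k<beta (i - 1). \<forall>j<beta i. lam i k j \<noteq> 0 \<longrightarrow> deg (i - 1) k \<le> deg i j"
    using assms(1) unfolding is_min_graded_resolution_def by (elim conjE) assumption
  have B: "\<forall>i\<ge>1. \<forall>k<beta (i - 1). \<forall>j<beta i. lam i k j \<noteq> 0 \<longrightarrow> deg (i - 1) k \<noteq> deg i j"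
    using assms(1) unfolding is_min_graded_resolution_def by (elim conjE) assumption
  show "deg (i - 1) k \<le> deg i j" using A assms(2-5) by blast
  show "deg (i - 1) k \<noteq> deg i j" using B assms(2-5) by blast
qed

lemma mult_if01: "x * (if P then 1 else 0) = (if P then x else (0::'a::semiring_1))"
  by simp

lemma diff_freemod: "diff beta deg lam i v \<in> freemod (beta (i - 1))"
  by (simp add: freemod_def diff_def)

lemma K1:
  fixes deg :: "nat \<Rightarrow> nat \<Rightarrow> 'v::finite \<Rightarrow> nat" and lam :: "nat \<Rightarrow> nat \<Rightarrow> nat \<Rightarrow> 'k::field"
  assumes res: "is_min_graded_resolution m a p beta deg lam" and i: "i \<ge> 1" and j: "j < beta i"
    and v: "v \<in> (freemod (beta i) :: (nat \<Rightarrow> ('v, 'k) mpoly) set)"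
    and v0: "Poly_Mapping.lookup (v j) 0 \<noteq> 0"
  shows "diff beta deg lam i v \<noteq> (\<lambda>_. 0)"
proof
  assume "diff beta deg lam i v = (\<lambda>_. 0)"
  then obtain z where z: "z \<in> freemod (beta (i+1))" "v = diff beta deg lam (i+1) z"
    using res_exact[OF res i v] by blast
  have "v j = (\<Sum>j'<beta (i+1). const (lam (i+1) j j') * xmon (deg (i+1) j' - deg i j) * z j')"
    using j by (simp add: z diff_def)
  then have "Poly_Mapping.lookup (v j) 0 = (\<Sum>j'<beta (i+1). Poly_Mapping.lookup (const (lam (i+1) j j') * xmon (deg (i+1) j' - deg i j) * z j') 0)"
    by (simp add: lookup_sum)
  also have "\<dots> = 0"
  proof (rule sum.neutral, intro ballI)
    fix j' assume j': "j' \<in> {..<beta (i+1)}"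
    show "Poly_Mapping.lookup (const (lam (i+1) j j') * xmon (deg (i+1) j' - deg i j) * z j') 0 = 0"
    proof (cases "lam (i+1) j j' = 0")
      case True then show ?thesis by (simp add: const_zero)
    next
      case False
      have "deg (i + 1 - 1) j \<le> deg (i+1) j'" "deg (i + 1 - 1) j \<noteq> deg (i+1) j'"
        using res_le[OF res _ _ _ False] j j' by auto
      then have "deg (i+1) j' - deg i j \<noteq> (\<lambda>_. 0)"
        by (auto simp: fun_eq_iff le_fun_def) (meson antisym_conv1 diff_is_0_eq leD)
      then show ?thesis by (rule const_xmon_lookup0)
    qed
  qed
  finally show False using v0 by simp
qed

lemma K2:
  fixes deg :: "nat \<Rightarrow> nat \<Rightarrow> 'v::finite \<Rightarrow> nat" and lam :: "nat \<Rightarrow> nat \<Rightarrow> nat \<Rightarrow> 'k::field"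
  assumes res: "is_min_graded_resolution m a p beta deg lam" and i: "i \<ge> 1" and j: "j < beta i"
  shows "\<exists>k<beta (i - 1). lam i k j \<noteq> 0"
proof (rule ccontr)
  assume h: "\<not> ?thesis"
  define e :: "nat \<Rightarrow> ('v, 'k) mpoly" where "e = (\<lambda>j'. if j' = j then 1 else 0)"
  have eF: "e \<in> freemod (beta i)" using j by (simp add: freemod_def e_def)
  have "diff beta deg lam i e = (\<lambda>_. 0)"
    using h j by (auto simp: diff_def e_def const_zero fun_eq_iff mult_if01 sum.delta)
  moreover have "diff beta deg lam i e \<noteq> (\<lambda>_. 0)"
    by (rule K1[OF res i j eF]) (simp add: e_def)
  ultimately show False by simp
qed

lemma K3:
  fixes deg :: "nat \<Rightarrow> nat \<Rightarrow> 'v::finite \<Rightarrow> nat" and lam :: "nat \<Rightarrow> nat \<Rightarrow> nat \<Rightarrow> 'k::field"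
  assumes res: "is_min_graded_resolution m a p beta deg lam" and i: "i \<ge> 2" and j: "j < beta i"
    and bub: "\<forall>k<beta (i - 1). lam i k j \<noteq> 0 \<longrightarrow> deg (i - 1) k \<le> b"
    and ble: "b \<le> deg i j"
  shows "b = deg i j"
proof (rule ccontr)
  assume ne: "b \<noteq> deg i j"
  define c where "c = deg i j - b"
  have c0: "c \<noteq> (\<lambda>_. 0)"
  proof
    assume "c = (\<lambda>_. 0)"
    then have "deg i j \<le> b" by (auto simp: c_def fun_eq_iff le_fun_def)
    then show False using ne ble by simp
  qed
  define w :: "nat \<Rightarrow> ('v, 'k) mpoly" where
    "w = (\<lambda>k. if k < beta (i - 1) then const (lam i k j) * xmon (b - deg (i - 1) k) else 0)"
  define e :: "nat \<Rightarrow> ('v, 'k) mpoly" where "e = (\<lambda>j'. if j' = j then 1 else 0)"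
  have eF: "e \<in> freemod (beta i)" using j by (simp add: freemod_def e_def)
  have de: "diff beta deg lam i e = (\<lambda>k. xmon c * w k)"
  proof (rule ext)
    fix k
    show "diff beta deg lam i e k = xmon c * w k"
    proof (cases "k < beta (i - 1)")
      case False then show ?thesis by (simp add: diff_def w_def)
    next
      case True
      have "diff beta deg lam i e k = const (lam i k j) * xmon (deg i j - deg (i - 1) k)"
        using True j by (simp add: diff_def e_def mult_if01 sum.delta)
      also have "\<dots> = xmon c * w k"
      proof (cases "lam i k j = 0")
        case True2: True
        then show ?thesis using True by (simp add: w_def const_zero)
      next
        case False
        have kb: "deg (i - 1) k \<le> b" using bub True False by blast
        have "deg i j - deg (i - 1) k = (\<lambda>v. c v + (b - deg (i - 1) k) v)"
          using kb ble by (auto simp: c_def fun_eq_iff le_fun_def)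
        then have eq: "xmon (deg i j - deg (i - 1) k) = xmon c * (xmon (b - deg (i - 1) k) :: ('v, 'k) mpoly)"
          by (simp add: xmon_add)
        have wk: "w k = const (lam i k j) * xmon (b - deg (i - 1) k)" using True by (simp add: w_def)
        show ?thesis unfolding eq wk by (rule mult.left_commute)
      qed
      finally show ?thesis .
    qed
  qed
  have i1: "i - 1 \<ge> 1" "i - 1 + 1 = i" using i by auto
  have "diff beta deg lam i e \<in> diff beta deg lam (i - 1 + 1) ` freemod (beta (i - 1 + 1))"
    using eF i1 by simp
  then have "diff beta deg lam (i - 1) (diff beta deg lam i e) = (\<lambda>_. 0)"
    using res_exact[OF res i1(1) diff_freemod[of beta deg lam i e]] by blast
  then have "(\<lambda>k. xmon c * diff beta deg lam (i - 1) w k) = (\<lambda>_. 0)"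
    unfolding de diff_scale .
  then have "diff beta deg lam (i - 1) w = (\<lambda>_. 0)"
    by (auto simp: fun_eq_iff intro: xmon_cancel)
  moreover have wF: "w \<in> freemod (beta (i - 1))" by (simp add: w_def freemod_def)
  ultimately have "w \<in> diff beta deg lam (i - 1 + 1) ` freemod (beta (i - 1 + 1))"
    using res_exact[OF res i1(1) wF] by blast
  then obtain u where u: "u \<in> freemod (beta i)" "w = diff beta deg lam i u"
    using i1 by auto
  define v' where "v' = (\<lambda>j'. e j' - xmon c * u j')"
  have "diff beta deg lam i v' = (\<lambda>_. 0)"
    unfolding v'_def diff_sub diff_scale de u(2)[symmetric] by simp
  moreover have "v' \<in> freemod (beta i)" using eF u(1) by (simp add: v'_def freemod_def)
  moreover have "Poly_Mapping.lookup (v' j) 0 \<noteq> 0"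
    using xmon_lookup0[OF c0, of "u j"] by (simp add: v'_def e_def lookup_minus)
  ultimately show False using K1[OF res _ j] i by auto
qed



lemma main_ind:
  fixes a :: "nat \<Rightarrow> 'v::finite \<Rightarrow> nat"
    and beta :: "nat \<Rightarrow> nat"
    and deg :: "nat \<Rightarrow> nat \<Rightarrow> 'v \<Rightarrow> nat"
    and lam :: "nat \<Rightarrow> nat \<Rightarrow> nat \<Rightarrow> 'k::field"
    and blk :: "'w::finite \<Rightarrow> 'v"
    and L :: "'v \<Rightarrow> nat \<Rightarrow> ('w, 'k) mpoly set"
  assumes res: "is_min_graded_resolution m a p beta deg lam"
    and L_mon: "\<forall>l. \<forall>j<m. monomial_ideal_in (blk -` {l}) (L l (a j l))"
    and L_chain: "\<forall>l. \<forall>j<m. \<forall>k<m. a j l \<ge> a k l \<longrightarrow> L l (a j l) \<subseteq> L l (a k l)"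
  shows "\<forall>j<beta (Suc i).
           (\<forall>l. \<exists>k<m. a k l = deg (Suc i) j l) \<and>
           Lcx (\<lambda>j. ideal_prod (\<lambda>l. L l (a j l))) beta lam (Suc i) j
             = ideal_prod (\<lambda>l. L l (deg (Suc i) j l))"
proof (induction i)
  case 0
  have b1: "beta 1 = m"
    using res unfolding is_min_graded_resolution_def by (elim conjE) assumption
  have d1: "\<forall>j<m. deg 1 j = a j \<and> lam 1 0 j = 1"
    using res unfolding is_min_graded_resolution_def by (elim conjE) assumption
  show ?case using b1 d1 by auto
next
  case (Suc i)
  let ?Lj = "\<lambda>j. ideal_prod (\<lambda>l. L l (a j l))"
  have chain: "L l x \<subseteq> L l y" if "\<exists>k1<m. a k1 l = x" "\<exists>k2<m. a k2 l = y" "y \<le> x" for l x y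
    using that L_chain by blast
  have mon: "monomial_ideal_in (blk -` {l}) (L l x)" if "\<exists>k1<m. a k1 l = x" for l x
    using that L_mon by blast
  have gen: "\<exists>A. L l x = ideal_gen A" if "\<exists>k1<m. a k1 l = x" for l x
    using mon[OF that] unfolding monomial_ideal_in_def by blast
  show ?case
  proof (intro allI impI)
    fix j assume j: "j < beta (Suc (Suc i))"
    define S where "S = {k. k < beta (Suc i) \<and> lam (Suc (Suc i)) k j \<noteq> 0}"
    have Sne: "S \<noteq> {}" using K2[OF res _ j] by (auto simp: S_def)
    have Sfin: "finite S" unfolding S_def by simp
    have leS: "deg (Suc i) k \<le> deg (Suc (Suc i)) j" if "k \<in> S" for k
      using res_le(1)[OF res _ _ j, of k] that by (auto simp: S_def)
    define b where "b = (\<lambda>l. Max ((\<lambda>k. deg (Suc i) k l) ` S))"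
    have bub: "\<forall>k<beta (Suc (Suc i) - 1). lam (Suc (Suc i)) k j \<noteq> 0 \<longrightarrow> deg (Suc (Suc i) - 1) k \<le> b"
      using Sfin by (auto simp: le_fun_def b_def S_def)
    have ble: "b \<le> deg (Suc (Suc i)) j"
      using Sfin Sne leS by (auto simp: le_fun_def b_def)
    have beq: "b = deg (Suc (Suc i)) j" by (rule K3[OF res _ j bub ble]) simp
    have arg: "\<exists>k\<in>S. deg (Suc (Suc i)) j l = deg (Suc i) k l" for l
    proof -
      have "Max ((\<lambda>k. deg (Suc i) k l) ` S) \<in> (\<lambda>k. deg (Suc i) k l) ` S"
        using Sfin Sne by (intro Max_in) auto
      then show ?thesis using beq unfolding b_def by (auto simp: fun_eq_iff)
    qed
    have IH: "\<And>k. k \<in> S \<Longrightarrow> (\<forall>l. \<exists>k'<m. a k' l = deg (Suc i) k l) \<and>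
           Lcx ?Lj beta lam (Suc i) k = ideal_prod (\<lambda>l. L l (deg (Suc i) k l))"
      using Suc.IH by (auto simp: S_def)
    have real: "\<exists>k<m. a k l = deg (Suc (Suc i)) j l" for l
      using arg[of l] IH by metis
    have Lcx_eq: "Lcx ?Lj beta lam (Suc (Suc i)) j = \<Inter> ((\<lambda>k. ideal_prod (\<lambda>l. L l (deg (Suc i) k l))) ` S)"
      using IH by (auto simp: S_def)
    have "\<Inter> ((\<lambda>k. ideal_prod (\<lambda>l. L l (deg (Suc i) k l))) ` S) = ideal_prod (\<lambda>l. L l (deg (Suc (Suc i)) j l))"
    proof
      show "ideal_prod (\<lambda>l. L l (deg (Suc (Suc i)) j l)) \<subseteq> \<Inter> ((\<lambda>k. ideal_prod (\<lambda>l. L l (deg (Suc i) k l))) ` S)"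
      proof (rule INF_greatest, rule ideal_prod_mono)
        fix k l assume k: "k \<in> S"
        show "L l (deg (Suc (Suc i)) j l) \<subseteq> L l (deg (Suc i) k l)"
          using chain[OF real[of l]] IH[OF k] leS[OF k] by (auto simp: le_fun_def)
      qed
    next
      show "\<Inter> ((\<lambda>k. ideal_prod (\<lambda>l. L l (deg (Suc i) k l))) ` S) \<subseteq> ideal_prod (\<lambda>l. L l (deg (Suc (Suc i)) j l))"
      proof
        fix f assume f: "f \<in> \<Inter> ((\<lambda>k. ideal_prod (\<lambda>l. L l (deg (Suc i) k l))) ` S)"
        have fl: "f \<in> L l (deg (Suc (Suc i)) j l)" for l
        proof -
          obtain k where k: "k \<in> S" "deg (Suc (Suc i)) j l = deg (Suc i) k l" using arg by blast
          have "f \<in> ideal_prod (\<lambda>l. L l (deg (Suc i) k l))" using f k by blast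
          also have "\<dots> \<subseteq> L l (deg (Suc i) k l)"
            by (rule ideal_prod_sub) (use IH[OF k(1)] gen in blast)
          finally show ?thesis using k by simp
        qed
        show "f \<in> ideal_prod (\<lambda>l. L l (deg (Suc (Suc i)) j l))"
          by (rule inter_sub_prod[where blk = blk]) (use mon real fl in auto)
      qed
    qed
    then show "(\<forall>l. \<exists>k<m. a k l = deg (Suc (Suc i)) j l) \<and>
           Lcx ?Lj beta lam (Suc (Suc i)) j = ideal_prod (\<lambda>l. L l (deg (Suc (Suc i)) j l))"
      using real Lcx_eq by simp
  qed
qed


theorem corollary1p7:
  fixes a :: "nat \<Rightarrow> 'v::finite \<Rightarrow> nat"
    and m p :: nat
    and I :: "('v, 'k::field) mpoly set"
    and beta :: "nat \<Rightarrow> nat"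
    and deg :: "nat \<Rightarrow> nat \<Rightarrow> 'v \<Rightarrow> nat"
    and lam :: "nat \<Rightarrow> nat \<Rightarrow> nat \<Rightarrow> 'k"
    and blk :: "'w::finite \<Rightarrow> 'v"
    and L :: "'v \<Rightarrow> nat \<Rightarrow> ('w, 'k) mpoly set"
  assumes I_def: "I = ideal_gen ((\<lambda>j. xmon (a j)) ` {..<m})"
    and I_proper: "I \<noteq> UNIV"
    and G_min: "\<forall>j<m. \<forall>k<m. j \<noteq> k \<longrightarrow> \<not> a j \<le> a k"
    and res: "is_min_graded_resolution m a p beta deg lam"
    and L_mon: "\<forall>l. \<forall>j<m. monomial_ideal_in (blk -` {l}) (L l (a j l))"
    and L_chain: "\<forall>l. \<forall>j<m. \<forall>k<m. a j l \<ge> a k l \<longrightarrow> L l (a j l) \<subseteq> L l (a k l)"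
  shows "\<forall>i\<in>{1..p}. \<forall>j<beta i.
           (\<forall>l. \<exists>k<m. a k l = deg i j l) \<and>
           Lcx (\<lambda>j. ideal_prod (\<lambda>l. L l (a j l))) beta lam i j
             = ideal_prod (\<lambda>l. L l (deg i j l))"
  proof (intro ballI allI impI)
  fix i j assume i: "i \<in> {1..p}" and j: "j < beta i"
  then obtain i' where i': "i = Suc i'" by (cases i) auto
  show "(\<forall>l. \<exists>k<m. a k l = deg i j l) \<and>
           Lcx (\<lambda>j. ideal_prod (\<lambda>l. L l (a j l))) beta lam i j
             = ideal_prod (\<lambda>l. L l (deg i j l))"
    using main_ind[OF res L_mon L_chain, of i'] j unfolding i' by blast
qed

end
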